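(* Let $G=(V,E)$ be a graph, $k$ a positive integer, $C$ a minimum vertex cover of $G$, and $I=V\setminus C$. Let $D$ be a $k$-membership dominating set of $G$. Let $C_1=D\cap C$, $I_1=I\setminus (N(C_1)\cap I)$, and $R=N(C_1)\cap I\cap D$. Then $I_1\subseteq D$, and every vertex of $C\setminus (N[C_1]\cup N(I_1))$ is dominated by $R$ (i.e. has a neighbor in $R$ or belongs to $R$).
   Context: All graphs are finite, simple and undirected. For $v\in V$, $N(v)$ and $N[v]$ are the open and closed neighborhoods; for $S\subseteq V$, $N(S)=\bigcup_{u\in S}N(u)\setminus S$ and $N[S]=\bigcup_{u\in S}N[u]$. A set $S\subseteq V$ is a dominating set if every vertex lies in $S$ or has a neighbor in $S$. The membership of $u$ in $S$ is $M(u,S)=|N[u]\cap S|$. A $k$-membership dominating set is a dominating set $S$ with $M(u,S)\le k$ for all $u\in V$. *)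

theory Defs
  imports Main
begin

definition graph :: "'a set \<Rightarrow> ('a \<Rightarrow> 'a \<Rightarrow> bool) \<Rightarrow> bool" where
  "graph V E \<longleftrightarrow> finite V \<and> (\<forall>u v. E u v \<longrightarrow> u \<in> V \<and> v \<in> V)
     \<and> (\<forall>u v. E u v \<longrightarrow> E v u) \<and> (\<forall>u. \<not> E u u)"

definition nbhd :: "'a set \<Rightarrow> ('a \<Rightarrow> 'a \<Rightarrow> bool) \<Rightarrow> 'a \<Rightarrow> 'a set" where
  "nbhd V E v = {u \<in> V. E v u}"

definition cnbhd :: "'a set \<Rightarrow> ('a \<Rightarrow> 'a \<Rightarrow> bool) \<Rightarrow> 'a \<Rightarrow> 'a set" where
  "cnbhd V E v = insert v (nbhd V E v)"

definition set_nbhd :: "'a set \<Rightarrow> ('a \<Rightarrow> 'a \<Rightarrow> bool) \<Rightarrow> 'a set \<Rightarrow> 'a set" where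
  "set_nbhd V E S = (\<Union>u\<in>S. nbhd V E u) - S"

definition set_cnbhd :: "'a set \<Rightarrow> ('a \<Rightarrow> 'a \<Rightarrow> bool) \<Rightarrow> 'a set \<Rightarrow> 'a set" where
  "set_cnbhd V E S = (\<Union>u\<in>S. cnbhd V E u)"

definition vertex_cover :: "'a set \<Rightarrow> ('a \<Rightarrow> 'a \<Rightarrow> bool) \<Rightarrow> 'a set \<Rightarrow> bool" where
  "vertex_cover V E C \<longleftrightarrow> C \<subseteq> V \<and> (\<forall>u v. E u v \<longrightarrow> u \<in> C \<or> v \<in> C)"

definition min_vertex_cover :: "'a set \<Rightarrow> ('a \<Rightarrow> 'a \<Rightarrow> bool) \<Rightarrow> 'a set \<Rightarrow> bool" where
  "min_vertex_cover V E C \<longleftrightarrow> vertex_cover V E C \<and>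
     (\<forall>C'. vertex_cover V E C' \<longrightarrow> card C \<le> card C')"

definition dominating_set :: "'a set \<Rightarrow> ('a \<Rightarrow> 'a \<Rightarrow> bool) \<Rightarrow> 'a set \<Rightarrow> bool" where
  "dominating_set V E S \<longleftrightarrow> S \<subseteq> V \<and> (\<forall>v\<in>V. v \<in> S \<or> (\<exists>u\<in>S. E v u))"

definition membership :: "'a set \<Rightarrow> ('a \<Rightarrow> 'a \<Rightarrow> bool) \<Rightarrow> 'a \<Rightarrow> 'a set \<Rightarrow> nat" where
  "membership V E u S = card (cnbhd V E u \<inter> S)"

definition k_membership_dom_set :: "'a set \<Rightarrow> ('a \<Rightarrow> 'a \<Rightarrow> bool) \<Rightarrow> nat \<Rightarrow> 'a set \<Rightarrow> bool" where
  "k_membership_dom_set V E k S \<longleftrightarrow> dominating_set V E S \<and>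
     (\<forall>u\<in>V. membership V E u S \<le> k)"

definition dominated_by :: "'a set \<Rightarrow> ('a \<Rightarrow> 'a \<Rightarrow> bool) \<Rightarrow> 'a set \<Rightarrow> 'a \<Rightarrow> bool" where
  "dominated_by V E R v \<longleftrightarrow> v \<in> R \<or> (\<exists>u\<in>R. E v u)"

end

theory Submission
  imports Defs
begin

theorem lemma6:
  fixes V :: "'a set" and E :: "'a \<Rightarrow> 'a \<Rightarrow> bool" and k :: nat
    and C D :: "'a set"
  assumes "graph V E"
    and "k \<ge> 1"
    and "min_vertex_cover V E C"
    and "k_membership_dom_set V E k D"
  defines "I \<equiv> V - C"
  defines "C1 \<equiv> D \<inter> C"
  defines "I1 \<equiv> I - (set_nbhd V E C1 \<inter> I)"
  defines "R \<equiv> set_nbhd V E C1 \<inter> I \<inter> D"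
  shows "I1 \<subseteq> D \<and>
    (\<forall>v \<in> C - (set_cnbhd V E C1 \<union> set_nbhd V E I1). dominated_by V E R v)"
proof -
  have g: "\<And>u v. E u v \<Longrightarrow> u \<in> V \<and> v \<in> V" "\<And>u v. E u v \<Longrightarrow> E v u"
    using assms(1) unfolding graph_def by blast+
  have vc: "\<And>u v. E u v \<Longrightarrow> u \<in> C \<or> v \<in> C" and CV: "C \<subseteq> V"
    using assms(3) unfolding min_vertex_cover_def vertex_cover_def by blast+
  have dom: "\<And>v. v \<in> V \<Longrightarrow> v \<in> D \<or> (\<exists>u\<in>D. E v u)" and DV: "D \<subseteq> V"
    using assms(4) unfolding k_membership_dom_set_def dominating_set_def by blast+
  have sn: "\<And>x S. x \<in> set_nbhd V E S \<longleftrightarrow> x \<notin> S \<and> (\<exists>u\<in>S. x \<in> V \<and> E u x)"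
    unfolding set_nbhd_def nbhd_def by blast
  have scn: "\<And>x S. x \<in> set_cnbhd V E S \<longleftrightarrow> x \<in> S \<or> (\<exists>u\<in>S. x \<in> V \<and> E u x)"
    unfolding set_cnbhd_def cnbhd_def nbhd_def by blast
  have I1m: "\<And>x. x \<in> I1 \<longleftrightarrow> x \<in> V \<and> x \<notin> C \<and> x \<notin> set_nbhd V E C1"
    unfolding I1_def I_def by blast
  have A: "I1 \<subseteq> D"
  proof
    fix v assume v: "v \<in> I1"
    show "v \<in> D"
    proof (rule ccontr)
      assume "v \<notin> D"
      moreover have "v \<in> V" using v I1m by blast
      ultimately obtain u where u: "u \<in> D" "E v u" using dom by blast
      have vnC: "v \<notin> C" using v I1m by blast
      have "u \<in> C" using vc[OF u(2)] vnC by blast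
      then have uC1: "u \<in> C1" using u unfolding C1_def by blast
      have vnC1: "v \<notin> C1" using vnC unfolding C1_def by blast
      have "v \<in> set_nbhd V E C1" unfolding sn using uC1 vnC1 g(1)[OF u(2)] g(2)[OF u(2)] by blast
      then show False using v I1m by blast
    qed
  qed
  have B: "\<forall>v \<in> C - (set_cnbhd V E C1 \<union> set_nbhd V E I1). dominated_by V E R v"
  proof
    fix v assume v: "v \<in> C - (set_cnbhd V E C1 \<union> set_nbhd V E I1)"
    have vC: "v \<in> C" and v1: "v \<notin> set_cnbhd V E C1" and v2: "v \<notin> set_nbhd V E I1" using v by auto
    have "v \<notin> C1" using v1 unfolding scn by blast
    then have vD: "v \<notin> D" using vC unfolding C1_def by blast
    have "v \<in> V" using vC CV by blast
    then obtain u where u: "u \<in> D" "E v u" using dom vD by blast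
    have uC: "u \<notin> C"
    proof
      assume "u \<in> C"
      then have "u \<in> C1" using u unfolding C1_def by blast
      then have "v \<in> set_cnbhd V E C1" unfolding scn using g(1)[OF u(2)] g(2)[OF u(2)] by blast
      then show False using v1 by blast
    qed
    have uV: "u \<in> V" using g(1)[OF u(2)] by blast
    have "u \<in> R"
    proof (rule ccontr)
      assume "u \<notin> R"
      then have "u \<notin> set_nbhd V E C1" using u uC uV unfolding R_def I_def by blast
      then have uI1: "u \<in> I1" unfolding I1m using uC uV by blast
      have "v \<notin> I1" using vC unfolding I1m by blast
      then have "v \<in> set_nbhd V E I1" unfolding sn using uI1 g(1)[OF u(2)] g(2)[OF u(2)] by blast
      then show False using v2 by blast
    qed
    then show "dominated_by V E R v" using u unfolding dominated_by_def by blast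
  qed
  show ?thesis using A B by blast
qed

end
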